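(* If a topological space $X$ has a countable $\mathsf{cs}^\bullet$-network at a point $x\in X$, then $X$ is $(\omega_1,\omega)_p$-equiconvergent at $x$.
   Context: A family $\mathcal N$ of subsets of $X$ is a $\mathsf{cs}^\bullet$-network at $x$ if for every neighborhood $O_x$ of $x$ and every sequence $(x_n)_{n\in\omega}$ converging to $x$ there is $N\in\mathcal N$ with $N\subseteq O_x$ and $x_n\in N$ for some $n$. $X$ is $(\omega_1,\omega)_p$-equiconvergent at $x$ if for every indexed family $\{x_\alpha\}_{\alpha\in\omega_1}$ of sequences in $X^\omega$ converging to $x$ there is a countably infinite $\Lambda\subseteq\omega_1$ such that for every neighborhood $O_x$ of $x$ there is $n\in\omega$ with $\{\alpha\in\Lambda: x_\alpha(n)\notin O_x\}$ finite. *)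

theory Defs
  imports "HOL-Analysis.Analysis"
begin

definition cs_bullet_network_at :: "'a topology \<Rightarrow> 'a set set \<Rightarrow> 'a \<Rightarrow> bool" where
  "cs_bullet_network_at X \<N> x \<longleftrightarrow>
     (\<forall>N\<in>\<N>. N \<subseteq> topspace X) \<and>
     (\<forall>U s. openin X U \<and> x \<in> U \<and> range s \<subseteq> topspace X \<and> limitin X s x sequentially
        \<longrightarrow> (\<exists>N\<in>\<N>. N \<subseteq> U \<and> (\<exists>n. s n \<in> N)))"

text \<open>The index set omega_1 is represented by an
  arbitrary set A of cardinality aleph_1 (i.e. card_of A is order-isomorphic to the
  successor cardinal of natLeq).\<close>
definition equiconv_w1_w_at :: "'a topology \<Rightarrow> 'a \<Rightarrow> bool" where
  "equiconv_w1_w_at X x \<longleftrightarrow>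
     (\<forall>(A :: nat set set) (xs :: nat set \<Rightarrow> nat \<Rightarrow> 'a).
        (card_of A, cardSuc natLeq) \<in> ordIso \<and>
        (\<forall>\<alpha>\<in>A. range (xs \<alpha>) \<subseteq> topspace X \<and> limitin X (xs \<alpha>) x sequentially)
        \<longrightarrow> (\<exists>\<Lambda>\<subseteq>A. countable \<Lambda> \<and> infinite \<Lambda> \<and>
               (\<forall>U. openin X U \<and> x \<in> U \<longrightarrow> (\<exists>n. finite {\<alpha>\<in>\<Lambda>. xs \<alpha> n \<notin> U}))))"

end

theory Submission
  imports Defs "HOL-Library.Countable_Set_Type"
begin

fun Fs :: "(nat \<Rightarrow> 'b set) \<Rightarrow> nat \<Rightarrow> 'b set" where
  "Fs C 0 = {}"
| "Fs C (Suc j) = insert (SOME a. a \<in> C j \<and> a \<notin> Fs C j) (Fs C j)"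

lemma Fs_finite: "finite (Fs C j)"
  by (induction j) simp_all

lemma pk_props:
  assumes "infinite (C j)"
  shows "(SOME a. a \<in> C j \<and> a \<notin> Fs C j) \<in> C j \<and> (SOME a. a \<in> C j \<and> a \<notin> Fs C j) \<notin> Fs C j"
proof (rule someI_ex)
  have "infinite (C j - Fs C j)" using assms Fs_finite[of C j] by (rule Diff_infinite_finite[rotated])
  then have "C j - Fs C j \<noteq> {}" by (metis finite.emptyI)
  then show "\<exists>a. a \<in> C j \<and> a \<notin> Fs C j" by blast
qed

lemma pk_in_Fs:
  assumes "i < j"
  shows "(SOME a. a \<in> C i \<and> a \<notin> Fs C i) \<in> Fs C j"
  using assms
proof (induction j)
  case 0 then show ?case by simp
next
  case (Suc j)
  show ?case
  proof (cases "i = j")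
    case True then show ?thesis by simp
  next
    case False
    then have "i < j" using Suc.prems by simp
    then show ?thesis using Suc.IH by simp
  qed
qed

lemma diag:
  fixes C :: "nat \<Rightarrow> 'b set"
  assumes "\<And>k. infinite (C k)"
  shows "\<exists>f. inj f \<and> (\<forall>j. f j \<in> C j)"
proof -
  define f where "f j = (SOME a. a \<in> C j \<and> a \<notin> Fs C j)" for j
  have fin: "f j \<in> C j" "f j \<notin> Fs C j" for j
    using pk_props[of C j, OF assms[of j]] unfolding f_def by auto
  have lt: "f i \<noteq> f j" if "i < j" for i j
  proof
    assume "f i = f j"
    moreover have "f i \<in> Fs C j" unfolding f_def by (rule pk_in_Fs[OF that])
    ultimately show False using fin(2)[of j] by simp
  qed
  have "inj f"
  proof (rule injI)
    fix a b assume e: "f a = f b"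
    show "a = b"
    proof (rule ccontr)
      assume "a \<noteq> b"
      then have "a < b \<or> b < a" by linarith
      then show False using lt e by metis
    qed
  qed
  then show ?thesis using fin(1) by blast
qed

theorem theorem4p2:
  fixes X :: "'a topology" and x :: 'a and \<N> :: "'a set set"
  assumes "x \<in> topspace X"
    and "countable \<N>"
    and "cs_bullet_network_at X \<N> x"
  shows "equiconv_w1_w_at X x"
  unfolding equiconv_w1_w_at_def
proof (intro allI impI)
  fix A :: "nat set set" and xs :: "nat set \<Rightarrow> nat \<Rightarrow> 'a"
  assume H: "(card_of A, cardSuc natLeq) \<in> ordIso \<and>
        (\<forall>\<alpha>\<in>A. range (xs \<alpha>) \<subseteq> topspace X \<and> limitin X (xs \<alpha>) x sequentially)"
  have unc: "uncountable A"
  proof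
    assume "countable A"
    then have "(card_of A, natLeq) \<in> ordLeq" by (simp add: countable_card_le_natLeq)
    moreover have "(natLeq, cardSuc natLeq) \<in> ordLess" by (rule cardSuc_greater[OF natLeq_Card_order])
    ultimately have "(card_of A, cardSuc natLeq) \<in> ordLess" by (rule ordLeq_ordLess_trans)
    then show False using H not_ordLess_ordIso by blast
  qed
  define Nk where "Nk k = from_nat_into \<N> k" for k
  define g where "g \<alpha> k = (if \<exists>n. xs \<alpha> n \<in> Nk k then Some (LEAST n. xs \<alpha> n \<in> Nk k) else None)" for \<alpha> k
  define P where "P k \<alpha> = map (g \<alpha>) [0..<k]" for k \<alpha>
  define S where "S = (\<Union>k. \<Union>p \<in> {p. countable {\<beta>\<in>A. P k \<beta> = p}}. {\<beta>\<in>A. P k \<beta> = p})"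
  have "countable S" unfolding S_def
  proof (rule countable_UN[OF countableI_type])
    fix k :: nat
    show "countable (\<Union>p \<in> {p. countable {\<beta>\<in>A. P k \<beta> = p}}. {\<beta>\<in>A. P k \<beta> = p})"
    proof (rule countable_UN)
      show "countable {p. countable {\<beta>\<in>A. P k \<beta> = p}}" by (rule countableI_type)
    qed simp
  qed
  have "\<not> A \<subseteq> S"
  proof
    assume "A \<subseteq> S"
    then have "countable A" using \<open>countable S\<close> by (rule countable_subset)
    then show False using unc by simp
  qed
  then obtain a where a: "a \<in> A" "a \<notin> S" by blast
  define C where "C k = {\<beta>\<in>A. P k \<beta> = P k a}" for k
  have Cunc: "uncountable (C k)" for k
  proof
    assume c: "countable (C k)"
    have "a \<in> (\<Union>p \<in> {p. countable {\<beta>\<in>A. P k \<beta> = p}}. {\<beta>\<in>A. P k \<beta> = p})"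
      by (rule UN_I[where a="P k a"]) (use c a(1) in \<open>simp_all add: C_def\<close>)
    then have "a \<in> S" unfolding S_def by (rule UN_I[OF UNIV_I])
    then show False using a(2) by simp
  qed
  have Cchar: "\<beta> \<in> C k \<longleftrightarrow> \<beta> \<in> A \<and> (\<forall>i<k. g \<beta> i = g a i)" for \<beta> k
    unfolding C_def P_def by (auto simp: map_eq_conv)
  have "\<exists>f. inj f \<and> (\<forall>j. f j \<in> C (Suc j))"
  proof (rule diag)
    fix k show "infinite (C (Suc k))" using Cunc[of "Suc k"] countable_finite by blast
  qed
  then obtain f where f: "inj f" "\<And>j. f j \<in> C (Suc j)" by blast
  show "\<exists>\<Lambda>\<subseteq>A. countable \<Lambda> \<and> infinite \<Lambda> \<and>
               (\<forall>U. openin X U \<and> x \<in> U \<longrightarrow> (\<exists>n. finite {\<alpha>\<in>\<Lambda>. xs \<alpha> n \<notin> U}))"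
  proof (rule exI[of _ "range f"], intro conjI allI impI)
    show "range f \<subseteq> A" using f(2) Cchar by blast
    show "countable (range f)" by simp
    show "infinite (range f)" using f(1) by (simp add: range_inj_infinite)
    fix U assume U: "openin X U \<and> x \<in> U"
    obtain N where N: "N \<in> \<N>" "N \<subseteq> U" "\<exists>n. xs a n \<in> N"
    proof -
      have cs: "\<forall>U s. openin X U \<and> x \<in> U \<and> range s \<subseteq> topspace X \<and> limitin X s x sequentially
        \<longrightarrow> (\<exists>N\<in>\<N>. N \<subseteq> U \<and> (\<exists>n. s n \<in> N))"
        using assms(3) unfolding cs_bullet_network_at_def by (rule conjunct2)
      have "range (xs a) \<subseteq> topspace X \<and> limitin X (xs a) x sequentially" using H a(1) by simp
      then have "\<exists>N\<in>\<N>. N \<subseteq> U \<and> (\<exists>n. xs a n \<in> N)" using cs U by simp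
      then show ?thesis using that by blast
    qed
    obtain k where k: "Nk k = N" using from_nat_into_surj[OF assms(2) N(1)] Nk_def by metis
    define m where "m = (LEAST n. xs a n \<in> N)"
    have gak: "g a k = Some m" using N(3) k unfolding g_def m_def by simp
    have "{\<alpha>\<in>range f. xs \<alpha> m \<notin> U} \<subseteq> f ` {..<k}"
    proof
      fix \<alpha> assume "\<alpha> \<in> {\<alpha>\<in>range f. xs \<alpha> m \<notin> U}"
      then obtain j where j: "\<alpha> = f j" "xs \<alpha> m \<notin> U" by blast
      show "\<alpha> \<in> f ` {..<k}"
      proof (rule ccontr)
        assume "\<alpha> \<notin> f ` {..<k}"
        then have "\<not> j < k" using j(1) by auto
        then have "k < Suc j" by simp
        have "\<forall>i<Suc j. g (f j) i = g a i" using f(2)[of j] Cchar by blast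
        then have "g \<alpha> k = Some m" using \<open>k < Suc j\<close> gak j(1) by simp
        then have "xs \<alpha> (LEAST n. xs \<alpha> n \<in> Nk k) \<in> Nk k \<and> m = (LEAST n. xs \<alpha> n \<in> Nk k)"
          unfolding g_def by (auto split: if_splits intro: LeastI_ex)
        then show False using j k N(2) by auto
      qed
    qed
    then show "\<exists>n. finite {\<alpha>\<in>range f. xs \<alpha> n \<notin> U}" by (meson finite_imageI finite_lessThan finite_subset)
  qed
qed

end
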